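(* Let $v=(v_n)_{n\in\mathbb{N}}\in\ell^1$ with $v_n>0$ for all $n$ and $\sum_{n=1}^\infty v_n=1$, and let $\tau_v(f)=\sum_{n=1}^\infty v_n f(1/2^{n-1})$ for $f\in C(\overline{\mathbb{N}})$. The following are equivalent: (1) $\tau_v(\varphi_n)=0$ for all $n\in\mathbb{N}$; (2) $v=(2^{-n})_{n\in\mathbb{N}}$.
   Context: $\mathbb{N}=\{1,2,\dots\}$, $\overline{\mathbb{N}}=\{1/2^{n-1}: n\in\mathbb{N}\}\cup\{0\}\subseteq\mathbb{R}$. For $n\in\mathbb{N}_0$, $\varphi_n:\overline{\mathbb{N}}\to\mathbb{R}$ is defined by $\varphi_n(x)=0$ if $x>1/2^{n-1}$, $\varphi_n(x)=-1$ if $x=1/2^{n-1}$, and $\varphi_n(x)=1$ if $x<1/2^{n-1}$. *)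

theory Defs
  imports Complex_Main
begin

definition Nbar :: "real set" where
  "Nbar = {1 / 2 ^ (n - 1) | n::nat. n \<ge> 1} \<union> {0}"

text \<open>phi n on Nbar (given by the same piecewise formula on all reals).\<close>
definition phi :: "nat \<Rightarrow> real \<Rightarrow> real" where
  "phi n x = (if x > 1 / 2 ^ (n - 1) then 0
              else if x = 1 / 2 ^ (n - 1) then -1 else 1)"

text \<open>Sequences v are indexed from 1 (the value v 0 is irrelevant).
  tau v f = sum over n >= 1 of v n * f (1/2^(n-1)).\<close>
definition tau :: "(nat \<Rightarrow> real) \<Rightarrow> (real \<Rightarrow> real) \<Rightarrow> real" where
  "tau v f = (\<Sum>n. v (Suc n) * f (1 / 2 ^ n))"

end

theory Submission
  imports Defs
begin

theorem proposition3p5: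
  fixes v :: "nat \<Rightarrow> real"
  assumes pos: "\<And>n. n \<ge> 1 \<Longrightarrow> v n > 0"
    and l1: "summable (\<lambda>n. v (Suc n))"
    and sum1: "(\<Sum>n. v (Suc n)) = 1"
  shows "(\<forall>n\<ge>1. tau v (phi n) = 0) \<longleftrightarrow> (\<forall>n\<ge>1. v n = 1 / 2 ^ n)"
proof -
  define S where "S j = (\<Sum>k. v (Suc (k + j)))" for j
  have sm: "summable (\<lambda>k. v (Suc (k + j)))" for j
    using l1 summable_iff_shift[of "\<lambda>n. v (Suc n)" j] by simp
  have S0: "S 0 = 1" using sum1 by (simp add: S_def)
  have Sstep: "S j = v (Suc j) + S (Suc j)" for j
    using suminf_split_head[OF sm[of j]] by (simp add: S_def)
  have tauphi: "tau v (phi (Suc j)) = S (Suc j) - v (Suc j)" for j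
  proof -
    define f where "f k = v (Suc k) * phi (Suc j) (1 / 2 ^ k)" for k
    have f_eq: "f k = (if k < j then 0 else if k = j then - v (Suc j) else v (Suc k))" for k
    proof -
      have "k < j \<Longrightarrow> (1::real) / 2 ^ k > 1 / 2 ^ j"
        by (simp add: divide_strict_left_mono power_strict_increasing)
      moreover have "k > j \<Longrightarrow> (1::real) / 2 ^ k < 1 / 2 ^ j"
        by (simp add: divide_strict_left_mono power_strict_increasing)
      ultimately show ?thesis by (auto simp: f_def phi_def)
    qed
    have tail: "(\<lambda>k. f (k + Suc j)) = (\<lambda>k. v (Suc (k + Suc j)))"
      by (auto simp: f_eq)
    have sf: "summable f"
      using summable_iff_shift[of f "Suc j"] tail sm[of "Suc j"] by simp
    have "suminf f = (\<Sum>k. f (k + Suc j)) + (\<Sum>i<Suc j. f i)"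
      using suminf_split_initial_segment[OF sf, of "Suc j"] by simp
    also have "(\<Sum>i<Suc j. f i) = - v (Suc j)"
      by (simp add: f_eq)
    finally show ?thesis using tail by (simp add: tau_def f_def[symmetric] S_def)
  qed
  show ?thesis
  proof
    assume h: "\<forall>n\<ge>1. tau v (phi n) = 0"
    have e: "v (Suc j) = S (Suc j)" for j using h tauphi[of j] by simp
    have SS: "S j = 1 / 2 ^ j" for j
    proof (induction j)
      case 0 then show ?case using S0 by simp
    next
      case (Suc j) then show ?case using Sstep[of j] e[of j] by simp
    qed
    show "\<forall>n\<ge>1. v n = 1 / 2 ^ n"
    proof (intro allI impI)
      fix n :: nat assume "n \<ge> 1"
      then obtain j where "n = Suc j" by (cases n) auto
      then show "v n = 1 / 2 ^ n" using e[of j] SS[of "Suc j"] by simp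
    qed
  next
    assume h: "\<forall>n\<ge>1. v n = 1 / 2 ^ n"
    have SS: "S j = 1 / 2 ^ j" for j
    proof (induction j)
      case 0 then show ?case using S0 by simp
    next
      case (Suc j) then show ?case using Sstep[of j] h by simp
    qed
    show "\<forall>n\<ge>1. tau v (phi n) = 0"
    proof (intro allI impI)
      fix n :: nat assume "n \<ge> 1"
      then obtain j where "n = Suc j" by (cases n) auto
      then show "tau v (phi n) = 0" using tauphi[of j] SS[of "Suc j"] h by simp
    qed
  qed
qed

end
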